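(* Each of the sets $\mathcal{L}_{SE}=\{(M,q)\mid SE[U](M)>q\}$, $\mathcal{L}_{ME}=\{(M,q)\mid ME[U](M)>q\}$ and $\mathcal{L}_{GE}=\{(M,q)\mid GE[U](M)>q\}$ is a liveness hyperproperty. That is, for each of them and for every rational number $q$, the set of programs $M$ with $(M,q)$ in it is a liveness hyperproperty.
   Context: Stores $\sigma$ map program variables to values. There is a designated high-security input variable $H$ and a low-security output variable $O$. A trace is a sequence of stores. $\Psi_{\mathrm{inf}}$ and $\Psi_{\mathrm{fin}}$ denote the sets of infinite and of finite traces. For a finite trace $t$, $t\circ t'$ is the concatenation of $t$ and $t'$. A set of traces is deterministic if any two of its traces that start with stores having the same value of $H$ are equal. A program is a deterministic set $M\subseteq\Psi_{\mathrm{inf}}$. Its input domain $\mathbb{H}_M=\{\sigma_0(H)\mid \sigma_0;\sigma_1;\dots\in M\}$ is finite and nonempty. Input domains are not bounded in size: the values of $H$ range over an unbounded set. For $h\in\mathbb{H}_M$, $M(h)$ is the output trace $(\sigma_1(O),\sigma_2(O),\dots)$ of the unique trace $\sigma_0;\sigma_1;\dots$ of $M$ with $\sigma_0(H)=h$. Output traces may contain the symbol $\bot$, which denotes termination. Observation is termination-insensitive: $M(h)=o$ means that for all $i$, $o_i=\bot$ or $M(h)_i=\bot$ or $M(h)_i=o_i$. Given a distribution $\mu$ on $\mathbb{H}_M$, put $\mu(O=o)=\sum_{h:\,M(h)=o}\mu(H=h)$, with joint and conditional probabilities induced accordingly. $U$ denotes the uniform distribution on $\mathbb{H}_M$. The following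 are defined, with logarithms base 2. - Shannon entropy: $\mathcal{H}[\mu](X)=\sum_x\mu(X=x)\log\frac1{\mu(X=x)}$. - Conditional Shannon entropy: $\mathcal{H}[\mu](Y|Z)=\sum_z\mu(Z=z)\sum_y\mu(Y=y|Z=z)\log\frac1{\mu(Y=y|Z=z)}$. - $SE[\mu](M)=\mathcal{H}[\mu](H)-\mathcal{H}[\mu](H|O)$. - $\mathcal{V}[\mu](X)=\max_x\mu(X=x)$ and $\mathcal{V}[\mu](X|Y)=\sum_y\mu(Y=y)\max_x\mu(X=x|Y=y)$. - $ME[\mu](M)=\log\frac1{\mathcal{V}[\mu](H)}-\log\frac1{\mathcal{V}[\mu](H|O)}$. - Guessing entropy: $\mathcal{G}[\mu](X)=\sum_{1\le i\le m}i\,\mu(X=x_i)$, where $x_1,\dots,x_m$ enumerates the sample space with $\mu(X=x_i)$ non-increasing in $i$. - $\mathcal{G}[\mu](X|Y)=\sum_y\mu(Y=y)\sum_i i\,\mu(X=x_i|Y=y)$, with the ordering chosen for each $y$ so that these conditional probabilities are non-increasing. - $GE[\mu](M)=\mathcal{G}[\mu](H)-\mathcal{G}[\mu](H|O)$. Let $\mathit{Prop}$ be the set of programs and $\mathit{Obs}$ the set of finite sets of finite traces that are deterministic. For $S\in\mathit{Obs}$ and $T\in\mathit{Prop}$, $S\le T$ iff for every $t\in S$ there is $t'$ with $t\circ t'\in T$. A hyperproperty is a set $P\subseteq\mathit{Prop}$. $P$ is a liveness hyperproperty iff for every $S\in\mathit{Obs}$ there is $S'\in\mathit{Prop}$ with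 $S\le S'$ and $S'\in P$. A set $\mathcal{P}$ of pairs (program, rational) is called a liveness hyperproperty iff for every rational $q$ the set $\{M\mid(M,q)\in\mathcal{P}\}$ is a liveness hyperproperty. *)

theory Defs
  imports Complex_Main "HOL-Library.Multiset"
begin

(* Stores map variables ('v) to values ('a).  Hvar is the high input variable,
   Ovar the low output variable, botv the termination symbol (a value). *)
type_synonym ('v,'a) store = "'v \<Rightarrow> 'a"
type_synonym ('v,'a) itrace = "nat \<Rightarrow> ('v,'a) store"
type_synonym ('v,'a) ftrace = "('v,'a) store list"

definition deterministic_inf :: "'v \<Rightarrow> ('v,'a) itrace set \<Rightarrow> bool" where
  "deterministic_inf Hvar T \<longleftrightarrow> (\<forall>t\<in>T. \<forall>t'\<in>T. t 0 Hvar = t' 0 Hvar \<longrightarrow> t = t')"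

definition deterministic_fin :: "'v \<Rightarrow> ('v,'a) ftrace set \<Rightarrow> bool" where
  "deterministic_fin Hvar S \<longleftrightarrow>
     (\<forall>t\<in>S. \<forall>t'\<in>S. t \<noteq> [] \<longrightarrow> t' \<noteq> [] \<longrightarrow> hd t Hvar = hd t' Hvar \<longrightarrow> t = t')"

definition input_domain :: "'v \<Rightarrow> ('v,'a) itrace set \<Rightarrow> 'a set" where
  "input_domain Hvar M = {t 0 Hvar | t. t \<in> M}"

definition is_program :: "'v \<Rightarrow> ('v,'a) itrace set \<Rightarrow> bool" where
  "is_program Hvar M \<longleftrightarrow> deterministic_inf Hvar M \<and> finite (input_domain Hvar M) \<and> input_domain Hvar M \<noteq> {}"

definition is_obs :: "'v \<Rightarrow> ('v,'a) ftrace set \<Rightarrow> bool" where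
  "is_obs Hvar S \<longleftrightarrow> finite S \<and> deterministic_fin Hvar S"

definition concat_trace :: "('v,'a) ftrace \<Rightarrow> ('v,'a) itrace \<Rightarrow> ('v,'a) itrace" where
  "concat_trace t t' = (\<lambda>i. if i < length t then t ! i else t' (i - length t))"

definition prefix_le :: "('v,'a) ftrace set \<Rightarrow> ('v,'a) itrace set \<Rightarrow> bool" where
  "prefix_le S T \<longleftrightarrow> (\<forall>t\<in>S. \<exists>t'. concat_trace t t' \<in> T)"

definition liveness :: "'v \<Rightarrow> ('v,'a) itrace set set \<Rightarrow> bool" where
  "liveness Hvar P \<longleftrightarrow> P \<subseteq> {M. is_program Hvar M} \<and>
     (\<forall>S. is_obs Hvar S \<longrightarrow> (\<exists>S'. is_program Hvar S' \<and> prefix_le S S' \<and> S' \<in> P))"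

definition liveness_pairs :: "'v \<Rightarrow> (('v,'a) itrace set \<times> rat) set \<Rightarrow> bool" where
  "liveness_pairs Hvar P \<longleftrightarrow> (\<forall>q. liveness Hvar {M. (M, q) \<in> P})"

definition out_trace :: "'v \<Rightarrow> 'v \<Rightarrow> ('v,'a) itrace set \<Rightarrow> 'a \<Rightarrow> nat \<Rightarrow> 'a" where
  "out_trace Hvar Ovar M h = (\<lambda>i. (THE t. t \<in> M \<and> t 0 Hvar = h) (Suc i) Ovar)"

(* termination-insensitive observation: M(h) = o *)
definition obs_eq :: "'a \<Rightarrow> (nat \<Rightarrow> 'a) \<Rightarrow> (nat \<Rightarrow> 'a) \<Rightarrow> bool" where
  "obs_eq botv m ob \<longleftrightarrow> (\<forall>i. ob i = botv \<or> m i = botv \<or> m i = ob i)"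

definition outputs :: "'v \<Rightarrow> 'v \<Rightarrow> ('v,'a) itrace set \<Rightarrow> (nat \<Rightarrow> 'a) set" where
  "outputs Hvar Ovar M = out_trace Hvar Ovar M ` input_domain Hvar M"

definition prob_O :: "'v \<Rightarrow> 'v \<Rightarrow> 'a \<Rightarrow> ('v,'a) itrace set \<Rightarrow> ('a \<Rightarrow> real) \<Rightarrow> (nat \<Rightarrow> 'a) \<Rightarrow> real" where
  "prob_O Hvar Ovar botv M mu ob = (\<Sum>h\<in>{h \<in> input_domain Hvar M. obs_eq botv (out_trace Hvar Ovar M h) ob}. mu h)"

definition cond_H :: "'v \<Rightarrow> 'v \<Rightarrow> 'a \<Rightarrow> ('v,'a) itrace set \<Rightarrow> ('a \<Rightarrow> real) \<Rightarrow> (nat \<Rightarrow> 'a) \<Rightarrow> 'a \<Rightarrow> real" where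
  "cond_H Hvar Ovar botv M mu ob h =
     (if obs_eq botv (out_trace Hvar Ovar M h) ob then mu h else 0) / prob_O Hvar Ovar botv M mu ob"

definition uniform :: "'v \<Rightarrow> ('v,'a) itrace set \<Rightarrow> 'a \<Rightarrow> real" where
  "uniform Hvar M h = (if h \<in> input_domain Hvar M then 1 / real (card (input_domain Hvar M)) else 0)"

definition shannon :: "'b set \<Rightarrow> ('b \<Rightarrow> real) \<Rightarrow> real" where
  "shannon A p = (\<Sum>x\<in>A. p x * log 2 (1 / p x))"

definition vuln :: "'b set \<Rightarrow> ('b \<Rightarrow> real) \<Rightarrow> real" where
  "vuln A p = Max (p ` A)"

definition guessing :: "'b set \<Rightarrow> ('b \<Rightarrow> real) \<Rightarrow> real" where
  "guessing A p = (let xs = rev (sorted_list_of_multiset (image_mset p (mset_set A)))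
                   in (\<Sum>i<length xs. real (Suc i) * xs ! i))"

definition SE :: "'v \<Rightarrow> 'v \<Rightarrow> 'a \<Rightarrow> ('a \<Rightarrow> real) \<Rightarrow> ('v,'a) itrace set \<Rightarrow> real" where
  "SE Hvar Ovar botv mu M =
     shannon (input_domain Hvar M) mu
     - (\<Sum>ob\<in>outputs Hvar Ovar M. prob_O Hvar Ovar botv M mu ob * shannon (input_domain Hvar M) (cond_H Hvar Ovar botv M mu ob))"

definition ME :: "'v \<Rightarrow> 'v \<Rightarrow> 'a \<Rightarrow> ('a \<Rightarrow> real) \<Rightarrow> ('v,'a) itrace set \<Rightarrow> real" where
  "ME Hvar Ovar botv mu M =
     log 2 (1 / vuln (input_domain Hvar M) mu)
     - log 2 (1 / (\<Sum>ob\<in>outputs Hvar Ovar M. prob_O Hvar Ovar botv M mu ob * vuln (input_domain Hvar M) (cond_H Hvar Ovar botv M mu ob)))"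

definition GE :: "'v \<Rightarrow> 'v \<Rightarrow> 'a \<Rightarrow> ('a \<Rightarrow> real) \<Rightarrow> ('v,'a) itrace set \<Rightarrow> real" where
  "GE Hvar Ovar botv mu M =
     guessing (input_domain Hvar M) mu
     - (\<Sum>ob\<in>outputs Hvar Ovar M. prob_O Hvar Ovar botv M mu ob * guessing (input_domain Hvar M) (cond_H Hvar Ovar botv M mu ob))"

definition L_SE :: "'v \<Rightarrow> 'v \<Rightarrow> 'a \<Rightarrow> (('v,'a) itrace set \<times> rat) set" where
  "L_SE Hvar Ovar botv = {(M, q). is_program Hvar M \<and> SE Hvar Ovar botv (uniform Hvar M) M > real_of_rat q}"

definition L_ME :: "'v \<Rightarrow> 'v \<Rightarrow> 'a \<Rightarrow> (('v,'a) itrace set \<times> rat) set" where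
  "L_ME Hvar Ovar botv = {(M, q). is_program Hvar M \<and> ME Hvar Ovar botv (uniform Hvar M) M > real_of_rat q}"

definition L_GE :: "'v \<Rightarrow> 'v \<Rightarrow> 'a \<Rightarrow> (('v,'a) itrace set \<times> rat) set" where
  "L_GE Hvar Ovar botv = {(M, q). is_program Hvar M \<and> GE Hvar Ovar botv (uniform Hvar M) M > real_of_rat q}"

end

theory Submission
  imports Defs
begin

lemma img_const: "finite A \<Longrightarrow> (\<forall>x\<in>A. f x = c) \<Longrightarrow> image_mset f (mset_set A) = replicate_mset (card A) c"
  by (induction A rule: finite_induct) auto

lemma guess_const:
  assumes "finite A" "\<forall>x\<in>A. p x = c"
  shows "guessing A p = c * (real (card A) * (real (card A) + 1) / 2)"
proof -
  have "image_mset p (mset_set A) = mset (replicate (card A) c)"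
    using img_const[OF assms] by simp
  then have "sorted_list_of_multiset (image_mset p (mset_set A)) = sort (replicate (card A) c)"
    by (simp only: sorted_list_of_multiset_mset)
  then have "rev (sorted_list_of_multiset (image_mset p (mset_set A))) = replicate (card A) c"
    by simp
  moreover have "(\<Sum>i<n. real (Suc i) * c) = c * (real n * (real n + 1) / 2)" for n
    by (induction n) (auto simp: algebra_simps)
  ultimately show ?thesis unfolding guessing_def Let_def by simp
qed

lemma guess_delta:
  assumes "finite A" "h0 \<in> A" "\<forall>x\<in>A. p x = (if x = h0 then 1 else 0)"
  shows "guessing A p = 1"
proof -
  have "image_mset p (mset_set A) = add_mset 1 (image_mset p (mset_set (A - {h0})))"
    using assms by (simp add: mset_set.remove)
  also have "image_mset p (mset_set (A - {h0})) = replicate_mset (card A - 1) 0"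
    using img_const[of "A - {h0}" p 0] assms by auto
  finally have "image_mset p (mset_set A) = mset (1 # replicate (card A - 1) 0)" by simp
  moreover have "sort (1 # replicate (card A - 1) (0::real)) = replicate (card A - 1) 0 @ [1]"
    by (rule properties_for_sort) (auto simp: sorted_append)
  ultimately have "rev (sorted_list_of_multiset (image_mset p (mset_set A))) = 1 # replicate (card A - 1) 0"
    by (simp only: sorted_list_of_multiset_mset) simp
  moreover have "(\<Sum>i<Suc n. real (Suc i) * ((1::real) # replicate n 0) ! i) = 1" for n
  proof -
    have "(\<Sum>i<Suc n. real (Suc i) * ((1::real) # replicate n 0) ! i) = (\<Sum>i\<in>{0}. real (Suc i) * ((1::real) # replicate n 0) ! i)"
      by (rule sum.mono_neutral_right) (auto simp: nth_Cons split: nat.splits)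
    then show ?thesis by simp
  qed
  ultimately show ?thesis unfolding guessing_def Let_def by simp
qed

lemma sep_facts:
  fixes M :: "('v,'a) itrace set" and Hvar Ovar :: 'v and botv :: 'a
  defines "A \<equiv> input_domain Hvar M" and "out \<equiv> out_trace Hvar Ovar M" and "n \<equiv> card (input_domain Hvar M)"
  assumes prog: "is_program Hvar M"
    and sep: "\<forall>h\<in>A. \<forall>h'\<in>A. obs_eq botv (out h) (out h') \<longrightarrow> h = h'"
  shows "SE Hvar Ovar botv (uniform Hvar M) M = log 2 n"
    and "ME Hvar Ovar botv (uniform Hvar M) M = log 2 n"
    and "GE Hvar Ovar botv (uniform Hvar M) M = (real n - 1) / 2"
proof -
  have fin: "finite A" and ne: "A \<noteq> {}" using prog unfolding is_program_def A_def by auto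
  have npos: "n > 0" using fin ne unfolding n_def A_def by auto
  let ?mu = "uniform Hvar M"
  have mu: "\<And>h. h \<in> A \<Longrightarrow> ?mu h = 1 / real n" unfolding uniform_def A_def n_def by simp
  have refl: "obs_eq botv m m" for m unfolding obs_eq_def by auto
  have inj: "inj_on out A" using sep refl unfolding inj_on_def by metis
  have outs: "outputs Hvar Ovar M = out ` A" unfolding outputs_def out_def A_def by simp
  have pO: "prob_O Hvar Ovar botv M ?mu (out h0) = 1 / real n" if "h0 \<in> A" for h0
  proof -
    have "{h \<in> input_domain Hvar M. obs_eq botv (out_trace Hvar Ovar M h) (out h0)} = {h0}"
      using sep that refl unfolding A_def out_def by auto
    then show ?thesis unfolding prob_O_def using mu that by simp
  qed
  have cH: "cond_H Hvar Ovar botv M ?mu (out h0) h = (if h = h0 then 1 else 0)" if "h0 \<in> A" "h \<in> A" for h0 h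
  proof -
    have "obs_eq botv (out h) (out h0) \<longleftrightarrow> h = h0" using sep that refl by metis
    then show ?thesis unfolding cond_H_def using pO[OF that(1)] mu[OF that(1)] mu[OF that(2)] npos
      by (auto simp add: out_def)
  qed
  have sh0: "shannon A (cond_H Hvar Ovar botv M ?mu (out h0)) = 0" if "h0 \<in> A" for h0
    unfolding shannon_def using cH[OF that] by (intro sum.neutral) auto
  have shU: "shannon A ?mu = log 2 n"
  proof -
    have "shannon A ?mu = (\<Sum>x\<in>A. 1 / real n * log 2 (real n))" unfolding shannon_def
      using mu by (intro sum.cong) auto
    also have "\<dots> = log 2 n" using npos unfolding n_def A_def by simp
    finally show ?thesis .
  qed
  have sumout: "(\<Sum>ob\<in>outputs Hvar Ovar M. g ob) = (\<Sum>h\<in>A. g (out h))" for g :: "(nat \<Rightarrow> 'a) \<Rightarrow> real"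
    unfolding outs using inj by (simp add: sum.reindex)
  show "SE Hvar Ovar botv ?mu M = log 2 n"
    unfolding SE_def sumout[unfolded A_def] using shU sh0 unfolding A_def by simp
  have vU: "vuln A ?mu = 1 / real n"
  proof -
    have "?mu ` A = {1 / real n}" using mu ne by auto
    then show ?thesis unfolding vuln_def by simp
  qed
  have v0: "vuln A (cond_H Hvar Ovar botv M ?mu (out h0)) = 1" if "h0 \<in> A" for h0
  proof -
    have "cond_H Hvar Ovar botv M ?mu (out h0) ` A \<subseteq> {0, 1}" using cH[OF that] by auto
    moreover have "1 \<in> cond_H Hvar Ovar botv M ?mu (out h0) ` A" using cH[OF that that] that by force
    ultimately have "Max (cond_H Hvar Ovar botv M ?mu (out h0) ` A) = 1"
      using fin by (intro Max_eqI) auto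
    then show ?thesis unfolding vuln_def .
  qed
  have s1: "(\<Sum>h\<in>A. prob_O Hvar Ovar botv M ?mu (out h) * vuln A (cond_H Hvar Ovar botv M ?mu (out h))) = 1"
  proof -
    have "(\<Sum>h\<in>A. prob_O Hvar Ovar botv M ?mu (out h) * vuln A (cond_H Hvar Ovar botv M ?mu (out h))) = (\<Sum>h\<in>A. 1 / real n)"
      using pO v0 by (intro sum.cong) auto
    also have "\<dots> = 1" using npos unfolding n_def A_def by simp
    finally show ?thesis .
  qed
  show "ME Hvar Ovar botv ?mu M = log 2 n"
    unfolding ME_def sumout[unfolded A_def] using vU s1 unfolding A_def by simp
  have gU: "guessing A ?mu = (real n + 1) / 2"
  proof -
    have "guessing A ?mu = 1 / real n * (real n * (real n + 1) / 2)"
      using guess_const[OF fin, of ?mu "1 / real n"] mu unfolding n_def A_def by simp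
    then show ?thesis using npos by simp
  qed
  have s2: "(\<Sum>h\<in>A. prob_O Hvar Ovar botv M ?mu (out h) * guessing A (cond_H Hvar Ovar botv M ?mu (out h))) = 1"
  proof -
    have "(\<Sum>h\<in>A. prob_O Hvar Ovar botv M ?mu (out h) * guessing A (cond_H Hvar Ovar botv M ?mu (out h))) = (\<Sum>h\<in>A. 1 / real n)"
      using pO guess_delta[OF fin] cH by (intro sum.cong) auto
    also have "\<dots> = 1" using npos unfolding n_def A_def by simp
    finally show ?thesis .
  qed
  show "GE Hvar Ovar botv ?mu M = (real n - 1) / 2"
    unfolding GE_def sumout[unfolded A_def] using gU s2 unfolding A_def by simp
qed

lemma construct:
  fixes S :: "('v,'a) ftrace set" and Hvar Ovar :: 'v and botv :: 'a
  assumes inf: "infinite (UNIV :: 'a set)" and obs: "is_obs Hvar S" and N1: "N \<ge> 1"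
  shows "\<exists>S'. is_program Hvar S' \<and> prefix_le S S' \<and> card (input_domain Hvar S') \<ge> N \<and>
     (\<forall>h\<in>input_domain Hvar S'. \<forall>h'\<in>input_domain Hvar S'.
        obs_eq botv (out_trace Hvar Ovar S' h) (out_trace Hvar Ovar S' h') \<longrightarrow> h = h')"
proof -
  have finS: "finite S" and det: "deterministic_fin Hvar S" using obs unfolding is_obs_def by auto
  define S0 where "S0 = {t\<in>S. t \<noteq> []}"
  define K where "K = (\<lambda>t. hd t Hvar) ` S0"
  have finK: "finite K" unfolding K_def S0_def using finS by simp
  define tK where "tK h = (THE t. t \<in> S0 \<and> hd t Hvar = h)" for h
  have tK: "tK (hd t Hvar) = t" if "t \<in> S0" for t
    unfolding tK_def
    by (rule the_equality) (use that det in \<open>auto simp: S0_def deterministic_fin_def\<close>)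
  have tKK: "tK h \<in> S0 \<and> hd (tK h) Hvar = h" if "h \<in> K" for h
    using that tK unfolding K_def by auto
  define Lm where "Lm = Suc (Suc (\<Sum>t\<in>S. length t))"
  have lenS: "length t < Lm" if "t \<in> S" for t
    using member_le_sum[of t S length] that finS unfolding Lm_def by simp
  obtain e where e: "e \<notin> insert botv K" using ex_new_if_finite[OF inf] finK by blast
  have "infinite (UNIV - insert e (insert botv K))" using inf finK by simp
  then obtain D where D: "finite D" "card D = N" "D \<subseteq> UNIV - insert e (insert botv K)"
    using infinite_arbitrarily_large by blast
  define f where "f h = (if h = botv then e else h)" for h
  define pre where "pre h = (if h \<in> K then tK h else [\<lambda>v. h])" for h
  define tr where "tr h = concat_trace (pre h) (\<lambda>_ v. f h)" for h
  define A where "A = K \<union> D"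
  define S' where "S' = tr ` A"
  have pre: "pre h \<noteq> [] \<and> hd (pre h) Hvar = h \<and> length (pre h) < Lm" if "h \<in> A" for h
  proof (cases "h \<in> K")
    case True
    then show ?thesis using tKK[OF True] lenS unfolding pre_def S0_def by auto
  next
    case False
    then show ?thesis unfolding pre_def Lm_def by simp
  qed
  have tr0: "tr h 0 Hvar = h" if "h \<in> A" for h
    using pre[OF that] unfolding tr_def concat_trace_def by (auto simp: hd_conv_nth)
  have trL: "tr h (Suc Lm) = (\<lambda>v. f h)" if "h \<in> A" for h
    using pre[OF that] unfolding tr_def concat_trace_def by simp
  have dom: "input_domain Hvar S' = A" unfolding input_domain_def S'_def
  proof (intro equalityI subsetI)
    fix x assume "x \<in> {t 0 Hvar |t. t \<in> tr ` A}"
    then show "x \<in> A" using tr0 by auto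
  next
    fix x assume "x \<in> A"
    then have "tr x 0 Hvar = x \<and> tr x \<in> tr ` A" using tr0 by auto
    then show "x \<in> {t 0 Hvar |t. t \<in> tr ` A}" by (intro CollectI exI[of _ "tr x"]) simp
  qed
  have finA: "finite A" unfolding A_def using finK D by simp
  have cardA: "card A \<ge> N" unfolding A_def using D finK by (metis card_mono finite_UnI sup_ge2)
  have Ane: "A \<noteq> {}" using cardA N1 by auto
  have detS': "deterministic_inf Hvar S'" unfolding deterministic_inf_def S'_def using tr0 by auto
  have prog: "is_program Hvar S'" unfolding is_program_def using detS' dom finA Ane by simp
  have outt: "out_trace Hvar Ovar S' h = (\<lambda>i. tr h (Suc i) Ovar)" if "h \<in> A" for h
  proof -
    have "(THE t. t \<in> S' \<and> t 0 Hvar = h) = tr h"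
      by (rule the_equality) (use that tr0 in \<open>auto simp: S'_def\<close>)
    then show ?thesis unfolding out_trace_def by simp
  qed
  have fnb: "f h \<noteq> botv" for h using e unfolding f_def by auto
  have finj: "f h = f h' \<Longrightarrow> h \<in> A \<Longrightarrow> h' \<in> A \<Longrightarrow> h = h'" for h h'
    using e D(3) unfolding f_def A_def by (auto split: if_splits)
  have sep: "\<forall>h\<in>A. \<forall>h'\<in>A. obs_eq botv (out_trace Hvar Ovar S' h) (out_trace Hvar Ovar S' h') \<longrightarrow> h = h'"
  proof (intro ballI impI)
    fix h h' assume h: "h \<in> A" and h': "h' \<in> A"
      and o: "obs_eq botv (out_trace Hvar Ovar S' h) (out_trace Hvar Ovar S' h')"
    from o have "tr h' (Suc Lm) Ovar = botv \<or> tr h (Suc Lm) Ovar = botv \<or> tr h (Suc Lm) Ovar = tr h' (Suc Lm) Ovar"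
      unfolding obs_eq_def outt[OF h] outt[OF h'] by blast
    then have "f h = f h'" using trL[OF h] trL[OF h'] fnb by auto
    then show "h = h'" using finj h h' by blast
  qed
  have pl: "prefix_le S S'" unfolding prefix_le_def
  proof
    fix t assume t: "t \<in> S"
    show "\<exists>t'. concat_trace t t' \<in> S'"
    proof (cases "t = []")
      case True
      obtain h where "h \<in> A" using Ane by auto
      then have "concat_trace t (tr h) \<in> S'" using True unfolding concat_trace_def S'_def by simp
      then show ?thesis by blast
    next
      case False
      then have t0: "t \<in> S0" using t unfolding S0_def by simp
      let ?h = "hd t Hvar"
      have hK: "?h \<in> K" using t0 unfolding K_def by blast
      have "tr ?h = concat_trace t (\<lambda>_ v. f ?h)" unfolding tr_def pre_def using hK tK[OF t0] by simp
      moreover have "tr ?h \<in> S'" unfolding S'_def A_def using hK by simp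
      ultimately show ?thesis by metis
    qed
  qed
  show ?thesis using prog pl cardA sep dom by auto
qed

lemma bigN: "\<exists>N::nat. N \<ge> 1 \<and> (\<forall>n\<ge>N. log 2 (real n) > r \<and> (real n - 1) / 2 > r)"
proof (intro exI conjI allI impI)
  define N where "N = nat \<lceil>2 powr r\<rceil> + nat \<lceil>2*r\<rceil> + 2"
  show "N \<ge> 1" unfolding N_def by simp
  fix n assume n: "n \<ge> N"
  have a: "real n \<ge> real N" using n by simp
  have b: "real N \<ge> 2 powr r + 2" unfolding N_def by linarith
  have c: "real N \<ge> 2 * r + 2" unfolding N_def by linarith
  have "2 powr r < real n" using a b by linarith
  moreover have "real n > 0" using a b by (smt (verit) powr_ge_zero)
  ultimately show "log 2 (real n) > r" by (simp add: less_log_iff)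
  show "(real n - 1) / 2 > r" using a c by (simp add: field_simps)
qed

theorem theorem2:
  fixes Hvar Ovar :: 'v and botv :: 'a
  assumes "infinite (UNIV :: 'a set)"
  shows "liveness_pairs Hvar (L_SE Hvar Ovar botv) \<and> liveness_pairs Hvar (L_ME Hvar Ovar botv) \<and> liveness_pairs Hvar (L_GE Hvar Ovar botv)"
proof -
  have key: "\<exists>S'. is_program Hvar S' \<and> prefix_le S S' \<and>
      SE Hvar Ovar botv (uniform Hvar S') S' > r \<and> ME Hvar Ovar botv (uniform Hvar S') S' > r \<and>
      GE Hvar Ovar botv (uniform Hvar S') S' > r" if obsS: "is_obs Hvar S" for S r
  proof -
    obtain N where N: "N \<ge> 1" "\<forall>n\<ge>N. log 2 (real n) > r \<and> (real n - 1) / 2 > r"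
      using bigN by blast
    obtain S' where S': "is_program Hvar S'" "prefix_le S S'" "card (input_domain Hvar S') \<ge> N"
      "\<forall>h\<in>input_domain Hvar S'. \<forall>h'\<in>input_domain Hvar S'.
        obs_eq botv (out_trace Hvar Ovar S' h) (out_trace Hvar Ovar S' h') \<longrightarrow> h = h'"
      using construct[OF assms obsS N(1), where Ovar=Ovar and botv=botv] by blast
    have "log 2 (real (card (input_domain Hvar S'))) > r" "(real (card (input_domain Hvar S')) - 1) / 2 > r"
      using N(2) S'(3) by auto
    then show ?thesis using sep_facts[OF S'(1) S'(4)] S'(1,2) by (intro exI[of _ S']) simp
  qed
  show ?thesis
    unfolding liveness_pairs_def liveness_def L_SE_def L_ME_def L_GE_def
    using key by (auto; metis)
qed

end
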